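(* Let $L\ge2$ and let $X=(X_0,\dots,X_{L-1})^T\sim\mathcal{N}(0,\Sigma_X)$ be a centered Gaussian vector with $\mathbb{E}[X_i^2]=1$ for all $i$ and $\mathbb{E}[X_iX_j]<1$ for all $i\neq j$. Let $\hat{R}=\arg\max_{0\le\ell\le L-1}X_\ell$. Then for every $0\le\ell\le L-1$, $\mathbb{E}[X_\ell\,\mathbb{1}_{\{\hat{R}=\ell\}}]>0$. *)

theory Defs
  imports "HOL-Probability.Probability"
begin

definition centered_gaussian_vector ::
  "'a measure \<Rightarrow> nat \<Rightarrow> (nat \<Rightarrow> 'a \<Rightarrow> real) \<Rightarrow> bool" where
  "centered_gaussian_vector M L X \<longleftrightarrow>
     (\<forall>i<L. X i \<in> borel_measurable M) \<and>
     (\<forall>c :: nat \<Rightarrow> real.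
        (AE \<omega> in M. (\<Sum>i<L. c i * X i \<omega>) = 0) \<or>
        (\<exists>\<sigma>>0. distributed M lborel (\<lambda>\<omega>. \<Sum>i<L. c i * X i \<omega>) (normal_density 0 \<sigma>)))"

definition argmax_index :: "nat \<Rightarrow> (nat \<Rightarrow> 'a \<Rightarrow> real) \<Rightarrow> 'a \<Rightarrow> nat" where
  "argmax_index L X \<omega> = (LEAST l. l < L \<and> (\<forall>k<L. X k \<omega> \<le> X l \<omega>))"

end

theory Submission
  imports Defs
begin

definition nlaw :: "real \<Rightarrow> real measure" where
  "nlaw v = distr std_normal_distribution borel (\<lambda>x. sqrt v * x)"

lemma real_distribution_nlaw: "real_distribution (nlaw v)"
  unfolding nlaw_def
  by (rule prob_space.real_distribution_distr) (auto simp: prob_space_normal_density)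

lemma char_nlaw: "0 \<le> v \<Longrightarrow> char (nlaw v) u = complex_of_real (exp (- (v * u\<^sup>2) / 2))"
proof -
  assume v: "0 \<le> v"
  have "char (nlaw v) u = char std_normal_distribution (sqrt v * u)"
    unfolding nlaw_def char_def by (subst integral_distr) (auto simp: mult_ac)
  also have "\<dots> = complex_of_real (exp (- (v * u\<^sup>2) / 2))"
    using v by (simp add: char_std_normal_distribution power_mult_distrib)
  finally show ?thesis .
qed

lemma nlaw_0: "nlaw 0 = return borel 0"
proof -
  have "nlaw 0 = distr std_normal_distribution borel (\<lambda>x. 0)"
    unfolding nlaw_def by (intro distr_cong) auto
  then show ?thesis by (simp add: prob_space_normal_density prob_space.distr_const)
qed

lemma nlaw_pos: assumes "0 < \<sigma>" shows "nlaw (\<sigma>\<^sup>2) = density lborel (normal_density 0 \<sigma>)"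
proof -
  interpret prob_space std_normal_distribution by (rule prob_space_normal_density) simp
  have d: "distributed std_normal_distribution lborel (\<lambda>x. x) (normal_density 0 1)"
    by (auto simp add: distributed_def intro!: distr_id2)
  have "distributed std_normal_distribution lborel (\<lambda>x. 0 + \<sigma> * x) (normal_density (0 + \<sigma> * 0) (\<bar>\<sigma>\<bar> * 1))"
    by (rule normal_density_affine[OF d]) (use assms in auto)
  then have "distr std_normal_distribution lborel (\<lambda>x. \<sigma> * x) = density lborel (normal_density 0 \<sigma>)"
    using assms by (simp add: distributed_def)
  moreover have "distr std_normal_distribution lborel (\<lambda>x. \<sigma> * x) = nlaw (\<sigma>\<^sup>2)"
    unfolding nlaw_def using assms by (intro distr_cong) auto
  ultimately show ?thesis by simp
qed

lemma nlaw_second_moment: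
  assumes "0 \<le> v"
  shows "integrable (nlaw v) (\<lambda>x. x\<^sup>2)" "(\<integral>x. x\<^sup>2 \<partial>nlaw v) = v"
proof -
  have i: "integrable std_normal_distribution (\<lambda>x. x^2)"
    by (rule integrable_std_normal_distribution_moment)
  have e: "(\<integral>x. x^2 \<partial>std_normal_distribution) = 1"
    using std_normal_distribution_even_moments(1)[of 1] by simp
  show "integrable (nlaw v) (\<lambda>x. x\<^sup>2)"
    unfolding nlaw_def by (subst integrable_distr_eq) (auto simp: power_mult_distrib intro: i)
  show "(\<integral>x. x\<^sup>2 \<partial>nlaw v) = v"
    unfolding nlaw_def using assms e by (subst integral_distr) (auto simp: power_mult_distrib)
qed

definition lc :: "nat \<Rightarrow> (nat \<Rightarrow> real) \<Rightarrow> (nat \<Rightarrow> 'a \<Rightarrow> real) \<Rightarrow> 'a \<Rightarrow> real" where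
  "lc n c Z \<omega> = (\<Sum>i<n. c i * Z i \<omega>)"

lemma lc_measurable[measurable]:
  "(\<And>i. i < n \<Longrightarrow> Z i \<in> borel_measurable M) \<Longrightarrow> lc n c Z \<in> borel_measurable M"
  unfolding lc_def by (intro borel_measurable_sum borel_measurable_times) auto

lemma lc_add: "lc n (\<lambda>i. a i + b i) Z \<omega> = lc n a Z \<omega> + lc n b Z \<omega>"
  unfolding lc_def by (simp add: distrib_right sum.distrib)

lemma lc_scale: "lc n (\<lambda>i. s * a i) Z \<omega> = s * lc n a Z \<omega>"
  unfolding lc_def by (simp add: sum_distrib_left mult_ac)

definition gauss :: "'a measure \<Rightarrow> nat \<Rightarrow> (nat \<Rightarrow> 'a \<Rightarrow> real) \<Rightarrow> ((nat \<Rightarrow> real) \<Rightarrow> real) \<Rightarrow> bool" where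
  "gauss M n Z v \<longleftrightarrow> prob_space M \<and> (\<forall>i<n. Z i \<in> borel_measurable M) \<and>
     (\<forall>c. 0 \<le> v c \<and> distr M borel (lc n c Z) = nlaw (v c))"

lemma gauss_sq:
  assumes "gauss M n Z v"
  shows "integrable M (\<lambda>\<omega>. (lc n c Z \<omega>)\<^sup>2)" "(\<integral>\<omega>. (lc n c Z \<omega>)\<^sup>2 \<partial>M) = v c"
proof -
  have m: "lc n c Z \<in> borel_measurable M" using assms unfolding gauss_def by (intro lc_measurable) auto
  have d: "distr M borel (lc n c Z) = nlaw (v c)" and v: "0 \<le> v c" using assms unfolding gauss_def by auto
  show "integrable M (\<lambda>\<omega>. (lc n c Z \<omega>)\<^sup>2)"
    using nlaw_second_moment(1)[OF v] d integrable_distr_eq[OF m, of "\<lambda>x. x\<^sup>2"] by simp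
  show "(\<integral>\<omega>. (lc n c Z \<omega>)\<^sup>2 \<partial>M) = v c"
    using nlaw_second_moment(2)[OF v] d integral_distr[OF m, of "\<lambda>x. x\<^sup>2"] by simp
qed

lemma gauss_cov:
  assumes "gauss M n Z v"
  shows "integrable M (\<lambda>\<omega>. lc n a Z \<omega> * lc n b Z \<omega>)"
    "(\<integral>\<omega>. lc n a Z \<omega> * lc n b Z \<omega> \<partial>M) = (v (\<lambda>i. a i + b i) - v a - v b) / 2"
proof -
  have eq: "lc n a Z \<omega> * lc n b Z \<omega> = ((lc n (\<lambda>i. a i + b i) Z \<omega>)\<^sup>2 - (lc n a Z \<omega>)\<^sup>2 - (lc n b Z \<omega>)\<^sup>2) / 2" for \<omega>
    by (simp add: lc_add power2_eq_square algebra_simps)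
  note i = gauss_sq(1)[OF assms]
  show "integrable M (\<lambda>\<omega>. lc n a Z \<omega> * lc n b Z \<omega>)"
    unfolding eq by (intro integrable_divide Bochner_Integration.integrable_diff i)
  show "(\<integral>\<omega>. lc n a Z \<omega> * lc n b Z \<omega> \<partial>M) = (v (\<lambda>i. a i + b i) - v a - v b) / 2"
    unfolding eq by (simp add: i gauss_sq(2)[OF assms] integrable_diff)
qed

lemma frozen_gauss:
  assumes P: "prob_space M" and G: "centered_gaussian_vector M L X"
  shows "gauss M L X (\<lambda>c. \<integral>\<omega>. (lc L c X \<omega>)\<^sup>2 \<partial>M)"
proof -
  interpret prob_space M by fact
  have meas: "\<forall>i<L. X i \<in> borel_measurable M" using G unfolding centered_gaussian_vector_def by auto
  have m: "lc L c X \<in> borel_measurable M" for c using meas by (intro lc_measurable) auto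
  have "0 \<le> (\<integral>\<omega>. (lc L c X \<omega>)\<^sup>2 \<partial>M) \<and> distr M borel (lc L c X) = nlaw (\<integral>\<omega>. (lc L c X \<omega>)\<^sup>2 \<partial>M)" for c
  proof -
    from G have "(AE \<omega> in M. lc L c X \<omega> = 0) \<or>
        (\<exists>\<sigma>>0. distributed M lborel (lc L c X) (normal_density 0 \<sigma>))"
      unfolding centered_gaussian_vector_def lc_def[abs_def] by auto
    then show ?thesis
    proof
      assume ae: "AE \<omega> in M. lc L c X \<omega> = 0"
      have "(\<integral>\<omega>. (lc L c X \<omega>)\<^sup>2 \<partial>M) = (\<integral>\<omega>. 0 \<partial>M)"
        using ae m by (intro integral_cong_AE) auto
      moreover have "distr M borel (lc L c X) = distr M borel (\<lambda>_. 0)"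
        using ae m by (intro distr_cong_AE) auto
      ultimately show ?thesis by (simp add: nlaw_0 distr_const)
    next
      assume "\<exists>\<sigma>>0. distributed M lborel (lc L c X) (normal_density 0 \<sigma>)"
      then obtain \<sigma> where s: "\<sigma> > 0" and d: "distributed M lborel (lc L c X) (normal_density 0 \<sigma>)" by auto
      have "distr M borel (lc L c X) = distr M lborel (lc L c X)"
        by (intro distr_cong) auto
      also have "\<dots> = nlaw (\<sigma>\<^sup>2)" using d s by (simp add: distributed_def nlaw_pos)
      finally have D: "distr M borel (lc L c X) = nlaw (\<sigma>\<^sup>2)" .
      have "(\<integral>\<omega>. (lc L c X \<omega>)\<^sup>2 \<partial>M) = (\<integral>x. x\<^sup>2 \<partial>distr M borel (lc L c X))"
        using m by (subst integral_distr) auto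
      also have "\<dots> = \<sigma>\<^sup>2" unfolding D by (rule nlaw_second_moment(2)) simp
      finally show ?thesis using D by simp
    qed
  qed
  then show ?thesis unfolding gauss_def using P meas by auto
qed

lemma iexp_cos: "complex_of_real (cos x) = (iexp x + iexp (- x)) / 2"
  using cos_exp_eq[of "complex_of_real x"] by (simp add: cos_of_real)

lemma iexp_sin: "complex_of_real (sin x) = (iexp x - iexp (- x)) / (2 * \<i>)"
  using sin_exp_eq[of "complex_of_real x"] by (simp add: sin_of_real)

lemma iexp_split: "iexp x = complex_of_real (cos x) + \<i> * complex_of_real (sin x)"
  by (simp add: cis_conv_exp[symmetric] cis.ctr complex_eq_iff)

lemma tilt_law:
  fixes W :: "'a \<Rightarrow> real" and g :: "'a \<Rightarrow> real"
  assumes P: "prob_space M" and W[measurable]: "W \<in> borel_measurable M"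
    and g[measurable]: "g \<in> borel_measurable M" and gnn: "\<And>\<omega>. 0 \<le> g \<omega>" and gb: "\<And>\<omega>. g \<omega> \<le> 2"
    and a: "0 \<le> a" and m: "0 < m"
    and DW: "distr M borel W = nlaw a"
    and ch: "\<And>t. (CLINT \<omega>|M. complex_of_real (g \<omega>) * iexp (t * W \<omega>)) = complex_of_real (m * exp (- (a * t\<^sup>2) / 2))"
    and B[measurable]: "B \<in> sets borel"
  shows "(\<integral>\<omega>. g \<omega> * indicator B (W \<omega>) \<partial>M) = m * (\<integral>\<omega>. indicator B (W \<omega>) \<partial>M)"
proof -
  interpret prob_space M by fact
  have ig: "integrable M g" using gnn gb by (intro integrable_const_bound[where B=2]) auto
  have "complex_of_real (\<integral>\<omega>. g \<omega> \<partial>M) = complex_of_real m"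
    using ch[of 0] by simp
  then have mg: "(\<integral>\<omega>. g \<omega> \<partial>M) = m" by simp
  define Q where "Q = density M (\<lambda>\<omega>. g \<omega> / m)"
  have Qint: "integral\<^sup>L Q f = (\<integral>\<omega>. (g \<omega> / m) *\<^sub>R f \<omega> \<partial>M)" if [measurable]: "f \<in> borel_measurable M"
    for f :: "'a \<Rightarrow> 'b::{banach, second_countable_topology}"
    unfolding Q_def by (rule integral_density) (use gnn m in auto)
  have "prob_space Q"
  proof
    have "emeasure Q (space Q) = (\<integral>\<^sup>+\<omega>. ennreal (g \<omega> / m) \<partial>M)"
      unfolding Q_def by (subst emeasure_density) (auto intro!: nn_integral_cong split: split_indicator)
    also have "\<dots> = ennreal (\<integral>\<omega>. g \<omega> / m \<partial>M)"
      using ig gnn m by (intro nn_integral_eq_integral) auto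
    also have "\<dots> = 1" using mg m by simp
    finally show "emeasure Q (space Q) = 1" .
  qed
  then interpret Q: prob_space Q .
  have WQ[measurable]: "W \<in> borel_measurable Q" unfolding Q_def by simp
  have "char (distr Q borel W) = char (nlaw a)"
  proof
    fix t
    have "char (distr Q borel W) t = (CLINT \<omega>|Q. iexp (t * W \<omega>))"
      unfolding char_def by (subst integral_distr) auto
    also have "\<dots> = (CLINT \<omega>|M. (g \<omega> / m) *\<^sub>R iexp (t * W \<omega>))"
      by (rule Qint) auto
    also have "\<dots> = (CLINT \<omega>|M. complex_of_real (g \<omega>) * iexp (t * W \<omega>)) / complex_of_real m"
      by (simp add: scaleR_conv_of_real)
    also have "\<dots> = complex_of_real (exp (- (a * t\<^sup>2) / 2))"
      unfolding ch of_real_divide[symmetric] using m by simp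
    also have "\<dots> = char (nlaw a) t" using char_nlaw[OF a] by simp
    finally show "char (distr Q borel W) t = char (nlaw a) t" .
  qed
  then have "distr Q borel W = nlaw a"
    by (intro Levy_uniqueness real_distribution_nlaw) auto
  then have DQ: "distr Q borel W = distr M borel W" using DW by simp
  have "(\<integral>\<omega>. indicator B (W \<omega>) \<partial>Q) = (\<integral>x. indicator B x \<partial>distr Q borel W :: real)"
    by (subst integral_distr) auto
  also have "\<dots> = (\<integral>x. indicator B x \<partial>distr M borel W)" by (simp add: DQ)
  also have "\<dots> = (\<integral>\<omega>. indicator B (W \<omega>) \<partial>M)" by (subst integral_distr) auto
  finally have "(\<integral>\<omega>. indicator B (W \<omega>) \<partial>Q) = (\<integral>\<omega>. indicator B (W \<omega>) \<partial>M :: real)" .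
  moreover have "(\<integral>\<omega>. indicator B (W \<omega>) \<partial>Q) = (\<integral>\<omega>. g \<omega> * indicator B (W \<omega>) \<partial>M) / m"
    by (subst Qint) auto
  ultimately show ?thesis using m by (simp add: field_simps)
qed


lemma integrable_iexp_real:
  assumes "prob_space M" "f \<in> borel_measurable M"
  shows "integrable M (\<lambda>\<omega>. iexp (f \<omega>))"
proof -
  interpret prob_space M by fact
  show ?thesis using assms(2) by (intro integrable_const_bound[where B=1]) (auto simp: norm_exp_i_times)
qed

lemma cos_mult_iexp:
  "complex_of_real (1 + cos x) * iexp y = iexp y + (iexp (y + x) + iexp (y - x)) / 2"
  by (simp add: iexp_cos algebra_simps exp_add[symmetric] exp_diff[symmetric])

lemma sin_mult_iexp:
  "complex_of_real (1 + sin x) * iexp y = iexp y + (iexp (y + x) - iexp (y - x)) / (2 * \<i>)"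
  by (simp add: iexp_sin algebra_simps exp_add[symmetric] exp_diff[symmetric] diff_divide_distrib)

lemma one_cos_bounds: "0 \<le> 1 + cos (x::real)" "1 + cos x \<le> 2"
  using cos_ge_minus_one[of x] cos_le_one[of x] by linarith+

lemma one_sin_bounds: "0 \<le> 1 + sin (x::real)" "1 + sin x \<le> 2"
  using sin_ge_minus_one[of x] sin_le_one[of x] by linarith+

lemma iexp_split2: "complex_of_real c * iexp x = complex_of_real (cos x * c) + \<i> * complex_of_real (sin x * c)"
  unfolding iexp_split by (simp add: algebra_simps)

lemma twoD:
  fixes W U :: "'a \<Rightarrow> real"
  assumes P: "prob_space M" and [measurable]: "W \<in> borel_measurable M" "U \<in> borel_measurable M"
    and a: "0 \<le> a" and b: "0 \<le> b"
    and L: "\<And>t u. distr M borel (\<lambda>\<omega>. t * W \<omega> + u * U \<omega>) = nlaw (t\<^sup>2 * a + u\<^sup>2 * b)"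
    and B[measurable]: "B \<in> sets borel"
  shows "(CLINT \<omega>|M. complex_of_real (indicator B (W \<omega>)) * iexp (u * U \<omega>))
       = complex_of_real ((\<integral>\<omega>. indicator B (W \<omega>) \<partial>M) * exp (- (b * u\<^sup>2) / 2))"
proof -
  interpret prob_space M by fact
  have E: "(CLINT \<omega>|M. iexp (t * W \<omega> + s * U \<omega>)) = complex_of_real (exp (- (t\<^sup>2 * a + s\<^sup>2 * b) / 2))" for t s
  proof -
    have "(CLINT \<omega>|M. iexp (t * W \<omega> + s * U \<omega>)) = char (distr M borel (\<lambda>\<omega>. t * W \<omega> + s * U \<omega>)) 1"
      unfolding char_def by (subst integral_distr) auto
    also have "\<dots> = complex_of_real (exp (- (t\<^sup>2 * a + s\<^sup>2 * b) / 2))"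
      unfolding L using a b by (subst char_nlaw) auto
    finally show ?thesis .
  qed
  have E1: "(CLINT \<omega>|M. iexp (t * W \<omega>)) = complex_of_real (exp (- (a * t\<^sup>2) / 2))" for t
    using E[of t 0] by (simp add: mult_ac)
  have E2: "(CLINT \<omega>|M. iexp (t * W \<omega> + u * U \<omega>)) = complex_of_real (exp (- (a * t\<^sup>2) / 2) * exp (- (b * u\<^sup>2) / 2))" for t
    using E[of t u] by (simp add: mult_ac exp_add[symmetric] add_divide_distrib diff_divide_distrib)
  have E3: "(CLINT \<omega>|M. iexp (t * W \<omega> - u * U \<omega>)) = complex_of_real (exp (- (a * t\<^sup>2) / 2) * exp (- (b * u\<^sup>2) / 2))" for t
    using E[of t "-u"] by (simp add: mult_ac exp_add[symmetric] add_divide_distrib diff_divide_distrib)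
  have DW: "distr M borel W = nlaw a"
    using L[of 1 0] by (simp cong: distr_cong)
  have ii: "integrable M (\<lambda>\<omega>. iexp (f \<omega>))" if "f \<in> borel_measurable M" for f
    using integrable_iexp_real[OF P that] .
  have i1: "integrable M (\<lambda>\<omega>. iexp (t * W \<omega>))" for t by (rule ii) simp
  have i2: "integrable M (\<lambda>\<omega>. iexp (t * W \<omega> + u * U \<omega>))" for t by (rule ii) simp
  have i3: "integrable M (\<lambda>\<omega>. iexp (t * W \<omega> - u * U \<omega>))" for t by (rule ii) simp
  define \<psi> where "\<psi> = exp (- (b * u\<^sup>2) / 2)"
  have psi: "0 < \<psi>" unfolding \<psi>_def by simp
  have C: "(\<integral>\<omega>. (1 + cos (u * U \<omega>)) * indicator B (W \<omega>) \<partial>M) = (1 + \<psi>) * (\<integral>\<omega>. indicator B (W \<omega>) \<partial>M)"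
  proof (rule tilt_law[OF P])
    fix t
    have "(CLINT \<omega>|M. complex_of_real (1 + cos (u * U \<omega>)) * iexp (t * W \<omega>))
        = (CLINT \<omega>|M. iexp (t * W \<omega>) + (iexp (t * W \<omega> + u * U \<omega>) + iexp (t * W \<omega> - u * U \<omega>)) / 2)"
      by (simp only: cos_mult_iexp)
    also have "\<dots> = (CLINT \<omega>|M. iexp (t * W \<omega>)) + ((CLINT \<omega>|M. iexp (t * W \<omega> + u * U \<omega>)) + (CLINT \<omega>|M. iexp (t * W \<omega> - u * U \<omega>))) / 2"
      by (simp only: Bochner_Integration.integral_add[OF i1 integrable_divide[OF Bochner_Integration.integrable_add[OF i2 i3]]] integral_divide_zero Bochner_Integration.integral_add[OF i2 i3])
    also have "\<dots> = complex_of_real ((1 + \<psi>) * exp (- (a * t\<^sup>2) / 2))"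
      unfolding E1 E2 E3 \<psi>_def by (simp add: algebra_simps)
    finally show "(CLINT \<omega>|M. complex_of_real (1 + cos (u * U \<omega>)) * iexp (t * W \<omega>)) = complex_of_real ((1 + \<psi>) * exp (- (a * t\<^sup>2) / 2))" .
  qed (use a psi DW one_cos_bounds in auto)
  have S: "(\<integral>\<omega>. (1 + sin (u * U \<omega>)) * indicator B (W \<omega>) \<partial>M) = 1 * (\<integral>\<omega>. indicator B (W \<omega>) \<partial>M)"
  proof (rule tilt_law[OF P])
    fix t
    have "(CLINT \<omega>|M. complex_of_real (1 + sin (u * U \<omega>)) * iexp (t * W \<omega>))
        = (CLINT \<omega>|M. iexp (t * W \<omega>) + (iexp (t * W \<omega> + u * U \<omega>) - iexp (t * W \<omega> - u * U \<omega>)) / (2 * \<i>))"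
      by (simp only: sin_mult_iexp)
    also have "\<dots> = (CLINT \<omega>|M. iexp (t * W \<omega>)) + ((CLINT \<omega>|M. iexp (t * W \<omega> + u * U \<omega>)) - (CLINT \<omega>|M. iexp (t * W \<omega> - u * U \<omega>))) / (2 * \<i>)"
      by (simp only: Bochner_Integration.integral_add[OF i1 integrable_divide[OF Bochner_Integration.integrable_diff[OF i2 i3]]] integral_divide_zero Bochner_Integration.integral_diff[OF i2 i3])
    also have "\<dots> = complex_of_real (1 * exp (- (a * t\<^sup>2) / 2))"
      unfolding E1 E2 E3 by simp
    finally show "(CLINT \<omega>|M. complex_of_real (1 + sin (u * U \<omega>)) * iexp (t * W \<omega>)) = complex_of_real (1 * exp (- (a * t\<^sup>2) / 2))" .
  qed (use a DW one_sin_bounds in auto)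
  have ib: "integrable M (\<lambda>\<omega>. f \<omega> * indicator B (W \<omega>))" if "f \<in> borel_measurable M" "\<And>\<omega>. \<bar>f \<omega>\<bar> \<le> 1" for f :: "'a \<Rightarrow> real"
    using that by (intro integrable_const_bound[where B=1]) (auto simp: indicator_def abs_le_iff)
  have iB: "integrable M (\<lambda>\<omega>. indicator B (W \<omega>) :: real)"
    by (intro integrable_const_bound[where B=1]) auto
  have C2: "(\<integral>\<omega>. cos (u * U \<omega>) * indicator B (W \<omega>) \<partial>M) = \<psi> * (\<integral>\<omega>. indicator B (W \<omega>) \<partial>M)"
    using C ib[of "\<lambda>\<omega>. cos (u * U \<omega>)"] iB by (simp add: distrib_right algebra_simps)
  have S2: "(\<integral>\<omega>. sin (u * U \<omega>) * indicator B (W \<omega>) \<partial>M) = 0"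
    using S ib[of "\<lambda>\<omega>. sin (u * U \<omega>)"] iB by (simp add: distrib_right algebra_simps)
  have "(CLINT \<omega>|M. complex_of_real (indicator B (W \<omega>)) * iexp (u * U \<omega>))
      = (CLINT \<omega>|M. complex_of_real (cos (u * U \<omega>) * indicator B (W \<omega>)) + \<i> * complex_of_real (sin (u * U \<omega>) * indicator B (W \<omega>)))"
    by (intro Bochner_Integration.integral_cong refl iexp_split2)
  also have "\<dots> = complex_of_real (\<integral>\<omega>. cos (u * U \<omega>) * indicator B (W \<omega>) \<partial>M) + \<i> * complex_of_real (\<integral>\<omega>. sin (u * U \<omega>) * indicator B (W \<omega>) \<partial>M)"
    using ib[of "\<lambda>\<omega>. cos (u * U \<omega>)"] ib[of "\<lambda>\<omega>. sin (u * U \<omega>)"]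
    by (subst Bochner_Integration.integral_add) (auto simp del: of_real_mult)
  also have "\<dots> = complex_of_real ((\<integral>\<omega>. indicator B (W \<omega>) \<partial>M) * exp (- (b * u\<^sup>2) / 2))"
    unfolding C2 S2 \<psi>_def by simp
  finally show ?thesis .
qed

definition vec :: "nat \<Rightarrow> (nat \<Rightarrow> 'a \<Rightarrow> real) \<Rightarrow> 'a \<Rightarrow> (nat \<Rightarrow> real)" where
  "vec n V \<omega> = (\<lambda>i\<in>{..<n}. V i \<omega>)"

abbreviation PB :: "nat \<Rightarrow> (nat \<Rightarrow> real) measure" where
  "PB n \<equiv> PiM {..<n} (\<lambda>_. borel)"

lemma vec_measurable[measurable]:
  "(\<And>i. i < n \<Longrightarrow> V i \<in> borel_measurable M) \<Longrightarrow> vec n V \<in> measurable M (PB n)"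
  unfolding vec_def by (intro measurable_restrict) auto

lemma prob_density:
  assumes P: "prob_space M" and [measurable]: "g \<in> borel_measurable M" and nn: "\<And>\<omega>. 0 \<le> g \<omega>"
    and ig: "integrable M g" and one: "(\<integral>\<omega>. g \<omega> \<partial>M) = 1"
  shows "prob_space (density M g)"
proof
  have "emeasure (density M g) (space (density M g)) = (\<integral>\<^sup>+\<omega>. ennreal (g \<omega>) \<partial>M)"
    by (subst emeasure_density) (auto intro!: nn_integral_cong split: split_indicator)
  also have "\<dots> = ennreal (\<integral>\<omega>. g \<omega> \<partial>M)"
    using ig nn by (intro nn_integral_eq_integral) auto
  also have "\<dots> = 1" using one by simp
  finally show "emeasure (density M g) (space (density M g)) = 1" .
qed

lemma gauss_scale:
  assumes "gauss M n V v" shows "v (\<lambda>i. s * c i) = s\<^sup>2 * v c"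
proof -
  have "v (\<lambda>i. s * c i) = (\<integral>\<omega>. (lc n (\<lambda>i. s * c i) V \<omega>)\<^sup>2 \<partial>M)" using gauss_sq(2)[OF assms] by simp
  also have "\<dots> = (\<integral>\<omega>. s\<^sup>2 * (lc n c V \<omega>)\<^sup>2 \<partial>M)" by (simp add: lc_scale power_mult_distrib)
  also have "\<dots> = s\<^sup>2 * v c" using gauss_sq(2)[OF assms] by simp
  finally show ?thesis .
qed

lemma indep_step:
  fixes V :: "nat \<Rightarrow> 'a \<Rightarrow> real" and W :: "'a \<Rightarrow> real"
  assumes IH: "\<And>M1 M2 vv. gauss M1 n V vv \<Longrightarrow> gauss M2 n V vv \<Longrightarrow>
                   distr M1 (PB n) (vec n V) = distr M2 (PB n) (vec n V)"
    and G: "gauss M n V vV" and Wm[measurable]: "W \<in> borel_measurable M" and a: "0 \<le> a"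
    and U: "\<And>t c. distr M borel (\<lambda>\<omega>. t * W \<omega> + lc n c V \<omega>) = nlaw (t\<^sup>2 * a + vV c)"
  shows "distr M (PB n \<Otimes>\<^sub>M borel) (\<lambda>\<omega>. (vec n V \<omega>, W \<omega>)) = distr M (PB n) (vec n V) \<Otimes>\<^sub>M distr M borel W"
proof -
  have P: "prob_space M" using G unfolding gauss_def by auto
  interpret prob_space M by fact
  have Vm[measurable]: "V i \<in> borel_measurable M" if "i < n" for i using G that unfolding gauss_def by auto
  have vnn: "0 \<le> vV c" for c using G unfolding gauss_def by auto
  show ?thesis
  proof (rule pair_measure_eqI[symmetric])
    show "sigma_finite_measure (distr M (PB n) (vec n V))"
      by (intro prob_space_imp_sigma_finite prob_space_distr) auto
    show "sigma_finite_measure (distr M borel W)"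
      by (intro prob_space_imp_sigma_finite prob_space_distr) auto
    show "sets (distr M (PB n) (vec n V) \<Otimes>\<^sub>M distr M borel W) = sets (distr M (PB n \<Otimes>\<^sub>M borel) (\<lambda>\<omega>. (vec n V \<omega>, W \<omega>)))"
      by (simp cong: sets_pair_measure_cong)
  next
    fix A B assume A: "A \<in> sets (distr M (PB n) (vec n V))" and B: "B \<in> sets (distr M borel W)"
    then have A[measurable]: "A \<in> sets (PB n)" and B[measurable]: "B \<in> sets borel" by auto
    define E where "E = W -` B \<inter> space M"
    define F where "F = vec n V -` A \<inter> space M"
    have E[measurable]: "E \<in> events" unfolding E_def by measurable
    have F[measurable]: "F \<in> events" unfolding F_def by measurable
    have lhs: "emeasure (distr M (PB n) (vec n V)) A * emeasure (distr M borel W) B = ennreal (prob F * prob E)"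
      by (simp add: emeasure_distr E_def F_def emeasure_eq_measure ennreal_mult)
    have "(\<lambda>\<omega>. (vec n V \<omega>, W \<omega>)) -` (A \<times> B) \<inter> space M = F \<inter> E" unfolding E_def F_def by auto
    then have rhs: "emeasure (distr M (PB n \<Otimes>\<^sub>M borel) (\<lambda>\<omega>. (vec n V \<omega>, W \<omega>))) (A \<times> B) = ennreal (prob (F \<inter> E))"
      by (simp add: emeasure_distr emeasure_eq_measure)
    have key: "prob F * prob E = prob (F \<inter> E)"
    proof (cases "prob E = 0")
      case True
      then have "prob (F \<inter> E) = 0" using finite_measure_mono[of "F \<inter> E" E] E by (simp add: antisym)
      with True show ?thesis by simp
    next
      case False
      define p where "p = prob E"
      have p: "0 < p" using False unfolding p_def by (simp add: zero_less_measure_iff)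
      define Q where "Q = density M (\<lambda>\<omega>. indicator E \<omega> / p)"
      have iE: "integrable M (\<lambda>\<omega>. indicator E \<omega> / p :: real)"
        by (intro integrable_divide integrable_const_bound[where B=1]) auto
      have PQ: "prob_space Q" unfolding Q_def
        by (rule prob_density[OF P]) (use p iE in \<open>auto simp: p_def\<close>)
      have Qint: "integral\<^sup>L Q f = (\<integral>\<omega>. (indicator E \<omega> / p) *\<^sub>R f \<omega> \<partial>M)" if [measurable]: "f \<in> borel_measurable M"
        for f :: "'a \<Rightarrow> 'b::{banach, second_countable_topology}"
        unfolding Q_def by (rule integral_density) (use p in auto)
      have GQ: "gauss Q n V vV"
        unfolding gauss_def
      proof (intro conjI allI impI PQ vnn)
        show "V i \<in> borel_measurable Q" if "i < n" for i unfolding Q_def using that by simp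
      next
        fix c
        interpret Q: prob_space Q by (rule PQ)
        have Um[measurable]: "lc n c V \<in> borel_measurable M" by measurable
        have UQ[measurable]: "lc n c V \<in> borel_measurable Q" unfolding Q_def by simp
        have "char (distr Q borel (lc n c V)) = char (nlaw (vV c))"
        proof
          fix u
          have L2: "distr M borel (\<lambda>\<omega>. t * W \<omega> + s * lc n c V \<omega>) = nlaw (t\<^sup>2 * a + s\<^sup>2 * vV c)" for t s
            using U[of t "\<lambda>i. s * c i"] by (simp add: lc_scale gauss_scale[OF G])
          have T: "(CLINT \<omega>|M. complex_of_real (indicator B (W \<omega>)) * iexp (u * lc n c V \<omega>))
             = complex_of_real ((\<integral>\<omega>. indicator B (W \<omega>) \<partial>M) * exp (- (vV c * u\<^sup>2) / 2))"
            by (rule twoD[OF P Wm Um a vnn L2 B])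
          have ind: "(\<integral>\<omega>. indicator B (W \<omega>) \<partial>M) = p"
          proof -
            have "(\<integral>\<omega>. indicator B (W \<omega>) \<partial>M) = (\<integral>\<omega>. indicator E \<omega> \<partial>M :: real)"
              by (intro Bochner_Integration.integral_cong) (auto simp: E_def indicator_def)
            then show ?thesis by (simp add: p_def)
          qed
          have "char (distr Q borel (lc n c V)) u = (CLINT \<omega>|Q. iexp (u * lc n c V \<omega>))"
            unfolding char_def by (subst integral_distr) auto
          also have "\<dots> = (CLINT \<omega>|M. (indicator E \<omega> / p) *\<^sub>R iexp (u * lc n c V \<omega>))"
            by (rule Qint) auto
          also have "\<dots> = (CLINT \<omega>|M. complex_of_real (indicator B (W \<omega>)) * iexp (u * lc n c V \<omega>)) / complex_of_real p"
          proof -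
            have "(CLINT \<omega>|M. (indicator E \<omega> / p) *\<^sub>R iexp (u * lc n c V \<omega>))
               = (CLINT \<omega>|M. complex_of_real (indicator B (W \<omega>)) * iexp (u * lc n c V \<omega>) / complex_of_real p)"
              by (intro Bochner_Integration.integral_cong refl)
                 (auto simp: E_def indicator_def scaleR_conv_of_real)
            then show ?thesis by simp
          qed
          also have "\<dots> = complex_of_real (exp (- (vV c * u\<^sup>2) / 2))"
            unfolding T ind of_real_divide[symmetric] using p by simp
          also have "\<dots> = char (nlaw (vV c)) u" by (simp add: char_nlaw[OF vnn])
          finally show "char (distr Q borel (lc n c V)) u = char (nlaw (vV c)) u" .
        qed
        then show "distr Q borel (lc n c V) = nlaw (vV c)"
          by (intro Levy_uniqueness real_distribution_nlaw) auto
      qed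
      have eqd: "distr M (PB n) (vec n V) = distr Q (PB n) (vec n V)" by (rule IH[OF G GQ])
      have "prob F = measure (distr M (PB n) (vec n V)) A"
        by (simp add: measure_distr F_def)
      also have "\<dots> = measure (distr Q (PB n) (vec n V)) A" by (simp add: eqd)
      also have "\<dots> = measure Q F"
        by (subst measure_distr) (auto simp: F_def Q_def)
      also have "\<dots> = (\<integral>\<omega>. indicator F \<omega> \<partial>Q)"
        using PQ by (simp add: prob_space.prob_space Q_def)
      also have "\<dots> = (\<integral>\<omega>. (indicator E \<omega> / p) * indicator F \<omega> \<partial>M)"
        by (subst Qint) auto
      also have "\<dots> = (\<integral>\<omega>. indicator (E \<inter> F) \<omega> \<partial>M) / p"
        by (simp add: indicator_inter_arith[symmetric] mult_ac)
      also have "\<dots> = prob (E \<inter> F) / p" by simp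
      finally show ?thesis using p unfolding p_def by (simp add: field_simps Int_commute)
    qed
    show "emeasure (distr M (PB n) (vec n V)) A * emeasure (distr M borel W) B =
          emeasure (distr M (PB n \<Otimes>\<^sub>M borel) (\<lambda>\<omega>. (vec n V \<omega>, W \<omega>))) (A \<times> B)"
      unfolding lhs rhs key ..
  qed
qed

lemma vec_0: "vec 0 Z \<omega> = (\<lambda>_. undefined)"
  unfolding vec_def by auto

lemma gauss_unique_0:
  assumes "prob_space M1" "prob_space M2"
  shows "distr M1 (PB 0) (vec 0 Z) = distr M2 (PB 0) (vec 0 Z)"
proof -
  have "distr Mi (PB 0) (vec 0 Z) = return (PB 0) (\<lambda>_. undefined)" if "prob_space Mi" for Mi :: "'a measure"
  proof -
    have "distr Mi (PB 0) (vec 0 Z) = distr Mi (PB 0) (\<lambda>_. (\<lambda>_. undefined))"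
      by (intro distr_cong) (auto simp: vec_0)
    also have "\<dots> = return (PB 0) (\<lambda>_. undefined)"
      by (rule prob_space.distr_const[OF that]) (simp add: space_PiM)
    finally show ?thesis .
  qed
  then show ?thesis using assms by simp
qed

definition ek :: "nat \<Rightarrow> nat \<Rightarrow> real" where "ek k = (\<lambda>i. if i = k then 1 else 0)"

lemma lc_ek: "k < n \<Longrightarrow> lc n (ek k) Z \<omega> = Z k \<omega>"
  unfolding lc_def ek_def by (simp add: mult_delta_left)

lemma gauss_AE_zero:
  assumes G: "gauss M n Z v" and k: "k < n" and m: "m < n" and z: "v (ek m) = 0"
  shows "(\<integral>\<omega>. Z k \<omega> * Z m \<omega> \<partial>M) = 0"
proof -
  have P: "prob_space M" and Zm[measurable]: "\<And>i. i < n \<Longrightarrow> Z i \<in> borel_measurable M" using G unfolding gauss_def by auto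
  have i: "integrable M (\<lambda>\<omega>. (Z m \<omega>)\<^sup>2)" using gauss_sq(1)[OF G, of "ek m"] m by (simp add: lc_ek)
  have "(\<integral>\<omega>. (Z m \<omega>)\<^sup>2 \<partial>M) = 0" using gauss_sq(2)[OF G, of "ek m"] m z by (simp add: lc_ek)
  then have "AE \<omega> in M. (Z m \<omega>)\<^sup>2 = 0"
    using integral_nonneg_eq_0_iff_AE[OF i] by auto
  then have "AE \<omega> in M. Z k \<omega> * Z m \<omega> = 0" by eventually_elim simp
  then have "(\<integral>\<omega>. Z k \<omega> * Z m \<omega> \<partial>M) = (\<integral>\<omega>. 0 \<partial>M)"
    using k m by (intro integral_cong_AE) auto
  then show ?thesis by simp
qed


lemma gauss_unique:
  "gauss M1 n Z v \<Longrightarrow> gauss M2 n Z v \<Longrightarrow> distr M1 (PB n) (vec n Z) = distr M2 (PB n) (vec n Z)"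
proof (induction n arbitrary: M1 M2 Z v)
  case 0
  then show ?case using gauss_unique_0 unfolding gauss_def by blast
next
  case (Suc n)
  define e where "e = ek n"
  define a where "a = v e"
  define cv where "cv k = (v (\<lambda>i. ek k i + e i) - v (ek k) - v e) / 2" for k
  define \<rho> where "\<rho> k = cv k / a" for k
  define V where "V k \<omega> = Z k \<omega> - \<rho> k * Z n \<omega>" for k \<omega>
  define ct where "ct c = (\<lambda>i. if i < n then c i else if i = n then - (\<Sum>k<n. c k * \<rho> k) else 0)" for c
  define vV where "vV c = v (ct c)" for c
  have lcV: "lc n c V \<omega> = lc (Suc n) (ct c) Z \<omega>" for c \<omega>
  proof -
    have "lc (Suc n) (ct c) Z \<omega> = (\<Sum>i<n. c i * Z i \<omega>) - (\<Sum>k<n. c k * \<rho> k) * Z n \<omega>"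
      unfolding lc_def ct_def by simp
    also have "\<dots> = lc n c V \<omega>"
      unfolding lc_def V_def by (simp add: right_diff_distrib sum_subtractf sum_distrib_left sum_distrib_right mult_ac)
    finally show ?thesis by simp
  qed
  have lcW: "t * Z n \<omega> + lc n c V \<omega> = lc (Suc n) (\<lambda>i. ct c i + t * e i) Z \<omega>" for t c \<omega>
    by (simp add: lc_add lc_scale lcV e_def lc_ek)
  have facts: "gauss M n V vV \<and> (\<forall>t c. distr M borel (\<lambda>\<omega>. t * Z n \<omega> + lc n c V \<omega>) = nlaw (t\<^sup>2 * a + vV c))
      \<and> distr M borel (Z n) = nlaw a" if G: "gauss M (Suc n) Z v" for M
  proof -
    have P: "prob_space M" and Zm[measurable]: "\<And>i. i < Suc n \<Longrightarrow> Z i \<in> borel_measurable M"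
      and vnn: "\<And>c. 0 \<le> v c" and D: "\<And>c. distr M borel (lc (Suc n) c Z) = nlaw (v c)"
      using G unfolding gauss_def by auto
    have Zn[measurable]: "Z n \<in> borel_measurable M" by simp
    have Vm[measurable]: "V k \<in> borel_measurable M" if "k < n" for k unfolding V_def using that by simp
    have cov: "(\<integral>\<omega>. Z k \<omega> * Z n \<omega> \<partial>M) = cv k" "integrable M (\<lambda>\<omega>. Z k \<omega> * Z n \<omega>)" if "k < Suc n" for k
      using gauss_cov[OF G, of "ek k" e] that by (simp_all add: lc_ek e_def cv_def)
    have orth: "(\<integral>\<omega>. V k \<omega> * Z n \<omega> \<partial>M) = 0" "integrable M (\<lambda>\<omega>. V k \<omega> * Z n \<omega>)" if "k < n" for k
    proof -
      have eq: "V k \<omega> * Z n \<omega> = Z k \<omega> * Z n \<omega> - \<rho> k * (Z n \<omega> * Z n \<omega>)" for \<omega>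
        unfolding V_def by (simp add: algebra_simps)
      show "integrable M (\<lambda>\<omega>. V k \<omega> * Z n \<omega>)"
        unfolding eq using cov(2)[of k] cov(2)[of n] that by auto
      have "(\<integral>\<omega>. V k \<omega> * Z n \<omega> \<partial>M) = cv k - \<rho> k * cv n"
        unfolding eq using cov[of k] cov[of n] that by simp
      also have "cv n = a"
        using cov(1)[of n] gauss_sq(2)[OF G, of e] by (simp add: e_def lc_ek power2_eq_square a_def)
      also have "cv k - \<rho> k * a = 0"
      proof (cases "a = 0")
        case True
        have "cv k = 0"
          using cov(1)[of k] gauss_AE_zero[OF G, of k n] that True by (simp add: a_def e_def)
        then show ?thesis using True by simp
      next
        case False then show ?thesis by (simp add: \<rho>_def)
      qed
      finally show "(\<integral>\<omega>. V k \<omega> * Z n \<omega> \<partial>M) = 0" .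
    qed
    have key: "v (\<lambda>i. ct c i + t * e i) = t\<^sup>2 * a + vV c" for t c
    proof -
      have "(\<integral>\<omega>. lc (Suc n) (ct c) Z \<omega> * lc (Suc n) (\<lambda>i. t * e i) Z \<omega> \<partial>M) = 0"
      proof -
        have eq: "lc (Suc n) (ct c) Z \<omega> * lc (Suc n) (\<lambda>i. t * e i) Z \<omega> = (\<Sum>k<n. (t * c k) * (V k \<omega> * Z n \<omega>))" for \<omega>
          by (simp add: lcV[symmetric] lc_scale e_def lc_ek) (simp add: lc_def sum_distrib_left mult_ac)
        show ?thesis unfolding eq
          by (subst Bochner_Integration.integral_sum) (auto simp: orth)
      qed
      moreover have "v (\<lambda>i. t * e i) = t\<^sup>2 * a" using gauss_scale[OF G] by (simp add: a_def)
      ultimately show ?thesis using gauss_cov(2)[OF G, of "ct c" "\<lambda>i. t * e i"] by (simp add: vV_def)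
    qed
    have "gauss M n V vV"
      unfolding gauss_def vV_def using P vnn by (auto simp: D lcV[abs_def] simp del: lc_def)
    moreover have "distr M borel (\<lambda>\<omega>. t * Z n \<omega> + lc n c V \<omega>) = nlaw (t\<^sup>2 * a + vV c)" for t c
      unfolding lcW key[symmetric] by (rule D)
    moreover have "distr M borel (Z n) = nlaw a"
    proof -
      have "distr M borel (Z n) = distr M borel (lc (Suc n) e Z)"
        by (intro distr_cong) (auto simp: e_def lc_ek)
      then show ?thesis by (simp add: D a_def)
    qed
    ultimately show ?thesis by blast
  qed
  have IHV: "\<And>M1 M2 vv. gauss M1 n V vv \<Longrightarrow> gauss M2 n V vv \<Longrightarrow> distr M1 (PB n) (vec n V) = distr M2 (PB n) (vec n V)"
    by (rule Suc.IH)
  have a0: "0 \<le> a" using Suc.prems(1) unfolding gauss_def a_def by auto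
  have pair: "distr M (PB n \<Otimes>\<^sub>M borel) (\<lambda>\<omega>. (vec n V \<omega>, Z n \<omega>)) = distr M (PB n) (vec n V) \<Otimes>\<^sub>M nlaw a"
    if G: "gauss M (Suc n) Z v" for M
  proof -
    have Zn: "Z n \<in> borel_measurable M" using G unfolding gauss_def by auto
    show ?thesis
      using indep_step[OF IHV conjunct1[OF facts[OF G]] Zn a0] facts[OF G] by simp
  qed
  define T where "T = (\<lambda>x::(nat \<Rightarrow> real) \<times> real. (\<lambda>i\<in>{..<Suc n}. if i < n then fst x i + \<rho> i * snd x else snd x))"
  have Tm: "T \<in> measurable (PB n \<Otimes>\<^sub>M borel) (PB (Suc n))"
    unfolding T_def
  proof (intro measurable_restrict, goal_cases)
    case (1 i)
    show ?case
    proof (cases "i < n")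
      case True
      have "(\<lambda>x. fst x i) \<in> borel_measurable (PB n \<Otimes>\<^sub>M borel)"
        using True by (intro measurable_compose[OF measurable_fst measurable_component_singleton]) auto
      then show ?thesis using True by simp
    next
      case False
      then show ?thesis by simp
    qed
  qed
  have vecZ: "vec (Suc n) Z \<omega> = T (vec n V \<omega>, Z n \<omega>)" for \<omega>
    unfolding T_def vec_def V_def by (auto simp: fun_eq_iff less_Suc_eq)
  have law: "distr M (PB (Suc n)) (vec (Suc n) Z) = distr (distr M (PB n \<Otimes>\<^sub>M borel) (\<lambda>\<omega>. (vec n V \<omega>, Z n \<omega>))) (PB (Suc n)) T"
    if G: "gauss M (Suc n) Z v" for M
  proof -
    have Zm[measurable]: "\<And>i. i < Suc n \<Longrightarrow> Z i \<in> borel_measurable M" using G unfolding gauss_def by auto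
    have Vm[measurable]: "V k \<in> borel_measurable M" if "k < n" for k unfolding V_def using that by simp
    have pm: "(\<lambda>\<omega>. (vec n V \<omega>, Z n \<omega>)) \<in> measurable M (PB n \<Otimes>\<^sub>M borel)" by measurable
    show ?thesis
      by (subst distr_distr[OF Tm pm]) (auto intro!: distr_cong simp: vecZ)
  qed
  show ?case
    unfolding law[OF Suc.prems(1)] law[OF Suc.prems(2)] pair[OF Suc.prems(1)] pair[OF Suc.prems(2)]
    using IHV[OF conjunct1[OF facts[OF Suc.prems(1)]] conjunct1[OF facts[OF Suc.prems(2)]]] by simp
qed

lemma sets_nlaw[simp, measurable_cong]: "sets (nlaw v) = sets borel"
  unfolding nlaw_def by simp

lemma nlaw1: "nlaw 1 = density lborel (normal_density 0 1)"
  using nlaw_pos[of 1] by simp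

lemma nlaw_AE_ne0:
  assumes "0 < w" shows "AE x in nlaw w. x \<noteq> 0"
proof -
  have eq: "nlaw w = density lborel (normal_density 0 (sqrt w))"
    using nlaw_pos[of "sqrt w"] assms by simp
  show ?thesis unfolding eq
    by (subst AE_density) (auto intro: eventually_mono[OF AE_lborel_singleton[of 0]])
qed

lemma nlaw1_pos_int:
  fixes f :: "real \<Rightarrow> real"
  assumes [measurable]: "f \<in> borel_measurable borel" and i: "integrable (nlaw 1) f"
    and nn: "\<And>x. 0 \<le> f x" and pos: "\<And>x. c < x \<Longrightarrow> x < c + 1 \<Longrightarrow> 0 < f x"
  shows "0 < (\<integral>x. f x \<partial>nlaw 1)"
proof -
  have ge: "0 \<le> (\<integral>x. f x \<partial>nlaw 1)" using nn by (intro integral_nonneg_AE) auto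
  have "(\<integral>x. f x \<partial>nlaw 1) \<noteq> 0"
  proof
    assume "(\<integral>x. f x \<partial>nlaw 1) = 0"
    then have "AE x in nlaw 1. f x = 0"
      using integral_nonneg_eq_0_iff_AE[OF i] nn by auto
    then have "AE x in lborel. 0 < normal_density 0 1 x \<longrightarrow> f x = 0"
      unfolding nlaw1 by (subst (asm) AE_density) auto
    then have "AE x in lborel. x \<notin> {c<..<c+1}"
      by eventually_elim (use pos normal_density_pos[of 1 0] in force)
    then have "emeasure lborel {c<..<c+1} = 0"
      by (subst (asm) AE_iff_measurable[of "{c<..<c+1}"]) auto
    then show False by simp
  qed
  with ge show ?thesis by simp
qed

lemma nlaw1_eq: "nlaw 1 = std_normal_distribution"
proof -
  have "nlaw 1 = distr std_normal_distribution borel (\<lambda>x. x)"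
    unfolding nlaw_def by (intro distr_cong) auto
  also have "\<dots> = std_normal_distribution" by (rule distr_id2) simp
  finally show ?thesis .
qed

lemma nlaw1_mean:
  shows "integrable (nlaw 1) (\<lambda>x. x)" "(\<integral>x. x \<partial>nlaw 1) = 0"
proof -
  have "integrable std_normal_distribution (\<lambda>x. x^1)" by (rule integrable_std_normal_distribution_moment)
  then show "integrable (nlaw 1) (\<lambda>x. x)"
    unfolding nlaw1_eq by simp
  have "(\<integral>x. x^1 \<partial>std_normal_distribution) = 0" by (rule integral_std_normal_distribution_moment_odd) simp
  then show "(\<integral>x. x \<partial>nlaw 1) = 0"
    unfolding nlaw1_eq by simp
qed

lemma nlaw1_tail_pos: "0 < (\<integral>x. x * indicator {z..} x \<partial>nlaw 1)"
proof -
  note m = nlaw1_mean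
  have ii: "integrable (nlaw 1) (\<lambda>x. x * indicator S x)" if [measurable]: "S \<in> sets borel" for S :: "real set"
  proof (rule Bochner_Integration.integrable_bound[OF m(1)])
    show "(\<lambda>x. x * indicator S x) \<in> borel_measurable (nlaw 1)" by measurable
  qed (auto simp: indicator_def)
  show ?thesis
  proof (cases "0 \<le> z")
    case True
    show ?thesis
      by (rule nlaw1_pos_int[where c="z + 1"]) (use True ii[of "{z..}"] in \<open>auto simp: indicator_def\<close>)
  next
    case False
    have "0 < (\<integral>x. - (x * indicator {..<z} x) \<partial>nlaw 1)"
      by (rule nlaw1_pos_int[where c="z - 2"]) (use False integrable_minus[OF ii[of "{..<z}"]] in \<open>auto simp: indicator_def mult_le_0_iff\<close>)
    moreover have "(\<integral>x. x * indicator {z..} x \<partial>nlaw 1) = (\<integral>x. x \<partial>nlaw 1) - (\<integral>x. x * indicator {..<z} x \<partial>nlaw 1)"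
    proof -
      have "(\<lambda>x. x * indicator {z..} x) = (\<lambda>x. x - x * indicator {..<z} x :: real)"
        by (auto simp: indicator_def fun_eq_iff)
      then show ?thesis using m(1) ii[of "{..<z}"] by simp
    qed
    ultimately show ?thesis using m(2) by simp
  qed
qed

lemma argmax_iff:
  fixes X :: "nat \<Rightarrow> 'a \<Rightarrow> real"
  assumes l: "l < L" and d: "\<forall>k<L. k \<noteq> l \<longrightarrow> X k \<omega> \<noteq> X l \<omega>"
  shows "argmax_index L X \<omega> = l \<longleftrightarrow> (\<forall>k<L. X k \<omega> \<le> X l \<omega>)"
proof
  assume h: "\<forall>k<L. X k \<omega> \<le> X l \<omega>"
  show "argmax_index L X \<omega> = l"
    unfolding argmax_index_def
  proof (rule Least_equality)
    show "l < L \<and> (\<forall>k<L. X k \<omega> \<le> X l \<omega>)" using l h by auto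
    fix y assume y: "y < L \<and> (\<forall>k<L. X k \<omega> \<le> X y \<omega>)"
    then have "X y \<omega> = X l \<omega>" using h l by (meson order_antisym)
    then have "y = l" using d y by auto
    then show "l \<le> y" by simp
  qed
next
  assume h: "argmax_index L X \<omega> = l"
  define m where "m = Max ((\<lambda>k. X k \<omega>) ` {..<L})"
  have ne: "{..<L} \<noteq> {}" using l by auto
  have "m \<in> (\<lambda>k. X k \<omega>) ` {..<L}" unfolding m_def using ne by (intro Max_in) auto
  then obtain j where j: "j < L" "X j \<omega> = m" by auto
  have "\<forall>k<L. X k \<omega> \<le> X j \<omega>" using j unfolding m_def by (auto intro: Max_ge)
  then have ex: "\<exists>j. j < L \<and> (\<forall>k<L. X k \<omega> \<le> X j \<omega>)" using j by auto
  have "argmax_index L X \<omega> < L \<and> (\<forall>k<L. X k \<omega> \<le> X (argmax_index L X \<omega>) \<omega>)"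
    unfolding argmax_index_def by (rule LeastI_ex[OF ex])
  then show "\<forall>k<L. X k \<omega> \<le> X l \<omega>" using h by simp
qed

lemma pos_integral_prob:
  fixes f :: "'b \<Rightarrow> real"
  assumes P: "prob_space N" and i: "integrable N f" and pos: "\<And>x. x \<in> space N \<Longrightarrow> 0 < f x"
  shows "0 < integral\<^sup>L N f"
proof -
  interpret prob_space N by fact
  have ge: "0 \<le> integral\<^sup>L N f" using pos by (intro integral_nonneg_AE) (auto intro: less_imp_le)
  have "integral\<^sup>L N f \<noteq> 0"
  proof
    assume "integral\<^sup>L N f = 0"
    then have "AE x in N. f x = 0" using integral_nonneg_eq_0_iff_AE[OF i] pos
      by (auto intro: less_imp_le)
    moreover have "AE x in N. f x \<noteq> 0" using pos by (intro AE_I2) (metis less_irrefl)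
    ultimately have "AE x in N. False" by eventually_elim simp
    then show False by simp
  qed
  with ge show ?thesis by simp
qed

lemma argmax_char:
  fixes X :: "nat \<Rightarrow> 'a \<Rightarrow> real"
  assumes l: "l < L"
  shows "argmax_index L X \<omega> = l \<longleftrightarrow>
    (\<forall>k\<in>{..<L}. X k \<omega> \<le> X l \<omega>) \<and> (\<forall>j\<in>{..<l}. \<exists>k\<in>{..<L}. X j \<omega> < X k \<omega>)"
proof -
  define P where "P j \<longleftrightarrow> j < L \<and> (\<forall>k<L. X k \<omega> \<le> X j \<omega>)" for j
  have ad: "argmax_index L X \<omega> = (LEAST j. P j)" unfolding argmax_index_def P_def ..
  define m where "m = Max ((\<lambda>k. X k \<omega>) ` {..<L})"
  have ne: "{..<L} \<noteq> {}" using l by auto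
  have "m \<in> (\<lambda>k. X k \<omega>) ` {..<L}" unfolding m_def using ne by (intro Max_in) auto
  then obtain j where j: "j < L" "X j \<omega> = m" by auto
  have "\<forall>k<L. X k \<omega> \<le> X j \<omega>" using j unfolding m_def by (auto intro: Max_ge)
  then have ex: "\<exists>j. P j" using j unfolding P_def by auto
  have "(LEAST j. P j) = l \<longleftrightarrow> P l \<and> (\<forall>j<l. \<not> P j)"
  proof
    assume h: "(LEAST j. P j) = l"
    show "P l \<and> (\<forall>j<l. \<not> P j)" using LeastI_ex[OF ex] not_less_Least[of _ P] h by auto
  next
    assume h: "P l \<and> (\<forall>j<l. \<not> P j)"
    show "(LEAST j. P j) = l" by (rule Least_equality) (use h in \<open>auto simp: not_less[symmetric]\<close>)
  qed
  then show ?thesis unfolding ad P_def using l by (auto simp: not_le)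
qed

theorem proposition6:
  fixes M :: "'a measure" and L :: nat and X :: "nat \<Rightarrow> 'a \<Rightarrow> real"
  assumes "prob_space M"
    and "L \<ge> 2"
    and "centered_gaussian_vector M L X"
    and "\<And>i. i < L \<Longrightarrow> (\<integral>\<omega>. (X i \<omega>)\<^sup>2 \<partial>M) = 1"
    and "\<And>i j. i < L \<Longrightarrow> j < L \<Longrightarrow> i \<noteq> j \<Longrightarrow> (\<integral>\<omega>. X i \<omega> * X j \<omega> \<partial>M) < 1"
  shows "\<forall>l<L. (\<integral>\<omega>. X l \<omega> * indicator {\<omega>. argmax_index L X \<omega> = l} \<omega> \<partial>M) > 0"
proof (intro allI impI)
  fix l assume l: "l < L"
  interpret prob_space M by fact
  define v where "v c = (\<integral>\<omega>. (lc L c X \<omega>)\<^sup>2 \<partial>M)" for c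
  have G: "gauss M L X v" using frozen_gauss[OF assms(1,3)] unfolding v_def[abs_def] .
  have Xm[measurable]: "X i \<in> borel_measurable M" if "i < L" for i
    using assms(3) that unfolding centered_gaussian_vector_def by auto
  have prodI: "integrable M (\<lambda>\<omega>. X i \<omega> * X j \<omega>)" if "i < L" "j < L" for i j
    using gauss_cov(1)[OF G, of "ek i" "ek j"] that by (simp add: lc_ek)
  define \<rho> where "\<rho> k = (\<integral>\<omega>. X k \<omega> * X l \<omega> \<partial>M)" for k
  have rl: "\<rho> l = 1" using assms(4)[OF l] by (simp add: \<rho>_def power2_eq_square)
  have rk: "\<rho> k < 1" if "k < L" "k \<noteq> l" for k using assms(5)[OF that(1) l that(2)] by (simp add: \<rho>_def)
  define V where "V k \<omega> = X k \<omega> - \<rho> k * X l \<omega>" for k \<omega>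
  have Vm[measurable]: "V k \<in> borel_measurable M" if "k < L" for k unfolding V_def using that l by simp
  define ct where "ct c = (\<lambda>i. c i - (if i = l then (\<Sum>k<L. c k * \<rho> k) else 0))" for c
  define vV where "vV c = v (ct c)" for c
  have lcV: "lc L c V \<omega> = lc L (ct c) X \<omega>" for c \<omega>
  proof -
    have "lc L (ct c) X \<omega> = lc L c X \<omega> - (\<Sum>k<L. c k * \<rho> k) * X l \<omega>"
      unfolding lc_def ct_def using l
      by (simp add: left_diff_distrib sum_subtractf if_distrib[of "\<lambda>x. x * X _ \<omega>"] cong: if_cong)
    also have "\<dots> = lc L c V \<omega>"
      unfolding lc_def V_def by (simp add: right_diff_distrib sum_subtractf sum_distrib_left sum_distrib_right mult_ac)
    finally show ?thesis by simp
  qed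
  have orth: "(\<integral>\<omega>. V k \<omega> * X l \<omega> \<partial>M) = 0" "integrable M (\<lambda>\<omega>. V k \<omega> * X l \<omega>)" if "k < L" for k
  proof -
    have eq: "V k \<omega> * X l \<omega> = X k \<omega> * X l \<omega> - \<rho> k * (X l \<omega> * X l \<omega>)" for \<omega>
      unfolding V_def by (simp add: algebra_simps)
    show "integrable M (\<lambda>\<omega>. V k \<omega> * X l \<omega>)"
      unfolding eq using prodI[of k l] prodI[of l l] that l by auto
    show "(\<integral>\<omega>. V k \<omega> * X l \<omega> \<partial>M) = 0"
      unfolding eq using prodI[of k l] prodI[of l l] that l rl by (simp add: \<rho>_def[symmetric])
  qed
  have vl: "v (ek l) = 1" using assms(4)[OF l] by (simp add: v_def lc_ek l)
  have key: "v (\<lambda>i. ct c i + t * ek l i) = t\<^sup>2 * 1 + vV c" for t c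
  proof -
    have "(\<integral>\<omega>. lc L (ct c) X \<omega> * lc L (\<lambda>i. t * ek l i) X \<omega> \<partial>M) = 0"
    proof -
      have eq: "lc L (ct c) X \<omega> * lc L (\<lambda>i. t * ek l i) X \<omega> = (\<Sum>k<L. (t * c k) * (V k \<omega> * X l \<omega>))" for \<omega>
        by (simp add: lcV[symmetric] lc_scale lc_ek l) (simp add: lc_def sum_distrib_left mult_ac)
      show ?thesis unfolding eq
        by (subst Bochner_Integration.integral_sum) (auto simp: orth)
    qed
    moreover have "v (\<lambda>i. t * ek l i) = t\<^sup>2 * 1" using gauss_scale[OF G] vl by simp
    ultimately show ?thesis using gauss_cov(2)[OF G, of "ct c" "\<lambda>i. t * ek l i"] by (simp add: vV_def)
  qed
  have vnn: "0 \<le> v c" for c using G unfolding gauss_def by auto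
  have D: "distr M borel (lc L c X) = nlaw (v c)" for c using G unfolding gauss_def by auto
  have GV: "gauss M L V vV"
    unfolding gauss_def vV_def using vnn by (auto simp: D lcV[abs_def] prob_space_axioms simp del: lc_def)
  have U: "distr M borel (\<lambda>\<omega>. t * X l \<omega> + lc L c V \<omega>) = nlaw (t\<^sup>2 * 1 + vV c)" for t c
  proof -
    have "(\<lambda>\<omega>. t * X l \<omega> + lc L c V \<omega>) = lc L (\<lambda>i. ct c i + t * ek l i) X"
      by (simp add: fun_eq_iff lc_add lc_scale lcV lc_ek l)
    then show ?thesis by (simp add: D key)
  qed
  have DXl: "distr M borel (X l) = nlaw 1"
  proof -
    have "distr M borel (X l) = distr M borel (lc L (ek l) X)"
      by (intro distr_cong) (auto simp: lc_ek l)
    then show ?thesis by (simp add: D vl)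
  qed
  have IHV: "\<And>M1 M2 vv. gauss M1 L V vv \<Longrightarrow> gauss M2 L V vv \<Longrightarrow> distr M1 (PB L) (vec L V) = distr M2 (PB L) (vec L V)"
    by (rule gauss_unique)
  have pair: "distr M (PB L \<Otimes>\<^sub>M borel) (\<lambda>\<omega>. (vec L V \<omega>, X l \<omega>)) = distr M (PB L) (vec L V) \<Otimes>\<^sub>M nlaw 1"
    using indep_step[OF IHV GV Xm[OF l], where a=1] U DXl by simp
  define K where "K = {..<L} - {l}"
  have Kfin: "finite K" unfolding K_def by simp
  have Kne: "K \<noteq> {}"
  proof -
    have "(if l = 0 then 1 else 0) \<in> K" unfolding K_def using assms(2) l by auto
    then show ?thesis by auto
  qed
  have Kr: "0 < 1 - \<rho> k" if "k \<in> K" for k using rk[of k] that unfolding K_def by auto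
  define S where "S = {p \<in> space (PB L \<Otimes>\<^sub>M borel). \<forall>k\<in>K. fst p k \<le> (1 - \<rho> k) * snd p}"
  have Ssets: "S \<in> sets (PB L \<Otimes>\<^sub>M borel)"
    unfolding S_def
  proof (rule sets.sets_Collect_finite_All[OF _ Kfin])
    fix k assume k: "k \<in> K"
    have [measurable]: "(\<lambda>p. fst p k) \<in> borel_measurable (PB L \<Otimes>\<^sub>M borel)"
      using k unfolding K_def by (intro measurable_compose[OF measurable_fst measurable_component_singleton]) auto
    show "{p \<in> space (PB L \<Otimes>\<^sub>M borel). fst p k \<le> (1 - \<rho> k) * snd p} \<in> sets (PB L \<Otimes>\<^sub>M borel)"
      by measurable
  qed
  define F where "F p = snd p * indicator S p" for p :: "(nat \<Rightarrow> real) \<times> real"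
  have Fm[measurable]: "F \<in> borel_measurable (PB L \<Otimes>\<^sub>M borel)" unfolding F_def using Ssets by measurable
  have pm[measurable]: "(\<lambda>\<omega>. (vec L V \<omega>, X l \<omega>)) \<in> measurable M (PB L \<Otimes>\<^sub>M borel)"
    using l by measurable
  have dist: "AE \<omega> in M. \<forall>k\<in>K. X k \<omega> \<noteq> X l \<omega>"
  proof (rule AE_finite_allI[OF Kfin])
    fix k assume k: "k \<in> K"
    then have kL: "k < L" and kl: "k \<noteq> l" unfolding K_def by auto
    define w where "w = v (\<lambda>i. ek k i - ek l i)"
    have lcD: "lc L (\<lambda>i. ek k i - ek l i) X \<omega> = X k \<omega> - X l \<omega>" for \<omega>
    proof -
      have "lc L (\<lambda>i. ek k i - ek l i) X \<omega> = lc L (ek k) X \<omega> - lc L (ek l) X \<omega>"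
        unfolding lc_def by (simp add: left_diff_distrib sum_subtractf)
      then show ?thesis by (simp add: lc_ek kL l)
    qed
    have "w = (\<integral>\<omega>. X k \<omega> * X k \<omega> - 2 * (X k \<omega> * X l \<omega>) + X l \<omega> * X l \<omega> \<partial>M)"
      unfolding w_def v_def lcD by (intro Bochner_Integration.integral_cong) (auto simp: power2_eq_square algebra_simps)
    also have "\<dots> = 2 - 2 * \<rho> k"
      using prodI[of k k] prodI[of k l] prodI[of l l] kL l assms(4)[OF kL] assms(4)[OF l]
      by (simp add: \<rho>_def power2_eq_square)
    finally have w: "0 < w" using rk[OF kL kl] by simp
    have "distr M borel (\<lambda>\<omega>. X k \<omega> - X l \<omega>) = distr M borel (lc L (\<lambda>i. ek k i - ek l i) X)"
      by (intro distr_cong) (auto simp: lcD)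
    also have "\<dots> = nlaw w" by (simp add: D w_def)
    finally have DD: "distr M borel (\<lambda>\<omega>. X k \<omega> - X l \<omega>) = nlaw w" .
    have "AE x in distr M borel (\<lambda>\<omega>. X k \<omega> - X l \<omega>). x \<noteq> 0" unfolding DD by (rule nlaw_AE_ne0[OF w])
    then have "AE \<omega> in M. X k \<omega> - X l \<omega> \<noteq> 0"
      using kL l by (subst (asm) AE_distr_iff) auto
    then show "AE \<omega> in M. X k \<omega> \<noteq> X l \<omega>" by auto
  qed
  have lhsm: "(\<lambda>\<omega>. X l \<omega> * indicator {\<omega>. argmax_index L X \<omega> = l} \<omega>) \<in> borel_measurable M"
  proof -
    have eq: "(\<lambda>\<omega>. X l \<omega> * indicator {\<omega>. argmax_index L X \<omega> = l} \<omega>) =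
      (\<lambda>\<omega>. X l \<omega> * (if (\<forall>k\<in>{..<L}. X k \<omega> \<le> X l \<omega>) \<and> (\<forall>j\<in>{..<l}. \<exists>k\<in>{..<L}. X j \<omega> < X k \<omega>) then 1 else 0))"
      using argmax_char[OF l, of X] by (auto simp: fun_eq_iff indicator_def)
    have [measurable]: "X k \<in> borel_measurable M" if "k \<in> {..<L}" for k using that by simp
    have [measurable]: "X k \<in> borel_measurable M" if "k \<in> {..<l}" for k using that l by simp
    show ?thesis unfolding eq using l by measurable
  qed
  have vecsp: "vec L V \<omega> \<in> space (PB L)" for \<omega> unfolding vec_def by (simp add: space_PiM)
  have ae: "AE \<omega> in M. X l \<omega> * indicator {\<omega>. argmax_index L X \<omega> = l} \<omega> = F (vec L V \<omega>, X l \<omega>)"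
    using dist
  proof eventually_elim
    case (elim \<omega>)
    have d: "\<forall>k<L. k \<noteq> l \<longrightarrow> X k \<omega> \<noteq> X l \<omega>" using elim unfolding K_def by auto
    have "argmax_index L X \<omega> = l \<longleftrightarrow> (\<forall>k<L. X k \<omega> \<le> X l \<omega>)" by (rule argmax_iff[where X=X, OF l d])
    also have "\<dots> \<longleftrightarrow> (vec L V \<omega>, X l \<omega>) \<in> S"
    proof -
      have "(\<forall>k<L. X k \<omega> \<le> X l \<omega>) \<longleftrightarrow> (\<forall>k\<in>K. V k \<omega> \<le> (1 - \<rho> k) * X l \<omega>)"
        unfolding K_def V_def by (auto simp: algebra_simps)
      also have "\<dots> \<longleftrightarrow> (\<forall>k\<in>K. vec L V \<omega> k \<le> (1 - \<rho> k) * X l \<omega>)"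
        unfolding K_def vec_def by auto
      finally show ?thesis unfolding S_def using vecsp[of \<omega>] by (simp add: space_pair_measure)
    qed
    finally show ?case unfolding F_def by (simp add: indicator_def)
  qed
  have iXl: "integrable M (\<lambda>\<omega>. X l \<omega>)"
    using integrable_distr_eq[OF Xm[OF l] measurable_ident_sets[OF refl]] nlaw1_mean(1) unfolding DXl by simp
  define \<mu> where "\<mu> = distr M (PB L) (vec L V)"
  have Pmu: "prob_space \<mu>" unfolding \<mu>_def by (rule prob_space_distr[OF vec_measurable[OF Vm]])
  have Pn: "prob_space (nlaw 1)" using real_distribution_nlaw[of 1] unfolding real_distribution_def by simp
  interpret PS: pair_sigma_finite \<mu> "nlaw 1"
    unfolding pair_sigma_finite_def using Pmu Pn by (auto intro: prob_space_imp_sigma_finite)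
  have pair': "distr M (PB L \<Otimes>\<^sub>M borel) (\<lambda>\<omega>. (vec L V \<omega>, X l \<omega>)) = \<mu> \<Otimes>\<^sub>M nlaw 1"
    unfolding \<mu>_def by (rule pair)
  have iF: "integrable (\<mu> \<Otimes>\<^sub>M nlaw 1) F"
  proof -
    have "integrable M (\<lambda>\<omega>. F (vec L V \<omega>, X l \<omega>))"
    proof (rule Bochner_Integration.integrable_bound[OF iXl])
      show "(\<lambda>\<omega>. F (vec L V \<omega>, X l \<omega>)) \<in> borel_measurable M" by (rule measurable_compose[OF pm Fm])
    qed (auto simp: F_def indicator_def)
    then show ?thesis unfolding pair'[symmetric] by (subst integrable_distr_eq) auto
  qed
  have "(\<integral>\<omega>. X l \<omega> * indicator {\<omega>. argmax_index L X \<omega> = l} \<omega> \<partial>M) = (\<integral>\<omega>. F (vec L V \<omega>, X l \<omega>) \<partial>M)"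
    by (rule integral_cong_AE[OF lhsm _ ae]) measurable
  also have "\<dots> = integral\<^sup>L (\<mu> \<Otimes>\<^sub>M nlaw 1) F"
    unfolding pair'[symmetric] by (subst integral_distr) auto
  also have "\<dots> = (\<integral>y. (\<integral>x. F (y, x) \<partial>nlaw 1) \<partial>\<mu>)"
    by (rule PS.integral_fst'[OF iF, symmetric])
  finally have eqI: "(\<integral>\<omega>. X l \<omega> * indicator {\<omega>. argmax_index L X \<omega> = l} \<omega> \<partial>M) = (\<integral>y. (\<integral>x. F (y, x) \<partial>nlaw 1) \<partial>\<mu>)" .
  have inner: "0 < (\<integral>x. F (y, x) \<partial>nlaw 1)" if y: "y \<in> space \<mu>" for y
  proof -
    define z where "z = Max ((\<lambda>k. y k / (1 - \<rho> k)) ` K)"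
    have "F (y, x) = x * indicator {z..} x" for x
    proof -
      have "(y, x) \<in> S \<longleftrightarrow> (\<forall>k\<in>K. y k \<le> (1 - \<rho> k) * x)"
        using y unfolding S_def \<mu>_def by (simp add: space_pair_measure)
      also have "\<dots> \<longleftrightarrow> (\<forall>k\<in>K. y k / (1 - \<rho> k) \<le> x)"
        using Kr by (simp add: pos_divide_le_eq mult.commute)
      also have "\<dots> \<longleftrightarrow> z \<le> x" unfolding z_def using Kfin Kne by simp
      finally show ?thesis unfolding F_def by (simp add: indicator_def)
    qed
    then show ?thesis using nlaw1_tail_pos[of z] by simp
  qed
  have "0 < (\<integral>y. (\<integral>x. F (y, x) \<partial>nlaw 1) \<partial>\<mu>)"
    by (rule pos_integral_prob[OF Pmu PS.integrable_fst'[OF iF] inner])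
  then show "0 < (\<integral>\<omega>. X l \<omega> * indicator {\<omega>. argmax_index L X \<omega> = l} \<omega> \<partial>M)"
    unfolding eqI .
qed


end
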